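(* Let $\Bbbk$ be a field of characteristic $0$ and let $A=\Bbbk\bar Q_1$ be the path algebra of the quiver with vertices $\{1,2\}$ and arrows $t:1\to2$, $s:2\to1$, viewed as an algebra over $B=\Bbbk e_1\oplus\Bbbk e_2$. Any $B$-linear double quasi-Poisson bracket on $A$ which has degree at most $+4$ on generators must be one of the following: Case 1: $\{\!\{s,s\}\!\}=0$, $\{\!\{t,t\}\!\}=0$ and either (1.a) $\{\!\{t,s\}\!\}=\frac\delta2(st\otimes e_1-e_2\otimes ts)$ with $\delta\in\{\pm1\}$, or (1.b) $\{\!\{t,s\}\!\}=\gamma e_2\otimes e_1+\phi\,st\otimes ts+\alpha(st\otimes e_1+e_2\otimes ts)$ with $\alpha,\gamma,\phi\in\Bbbk$, $\alpha^2=\frac14+\gamma\phi$; Case 2: $\{\!\{s,s\}\!\}=0$, $\{\!\{t,t\}\!\}=\lambda(tst\otimes t-t\otimes tst)$ with $\lambda\in\Bbbk^\times$, and $\{\!\{t,s\}\!\}=\frac\delta2(st\otimes e_1-e_2\otimes ts)$ with $\delta\in\{\pm1\}$; Case 3: $\{\!\{t,t\}\!\}=0$, $\{\!\{s,s\}\!\}=\lambda(sts\otimes s-s\otimes sts)$ with $\lambda\in\Bbbk^\times$, and $\{\!\{t,s\}\!\}=\frac\delta2(st\otimes e_1-e_2\otimes ts)$ with $\delta\in\{\pm1\}$.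
   Context: The path algebra is generated by $e_1,e_2,t,s$ with $e_ie_j=\delta_{ij}e_i$, $e_1+e_2=1$, $t=e_1te_2$, $s=e_2se_1$. Grade $A$ by $|s|=|t|=1$ (idempotents in degree 0) and $A\otimes A$ by total degree; "degree at most $+4$ on generators" means each of $\{\!\{s,s\}\!\},\{\!\{t,t\}\!\},\{\!\{t,s\}\!\}$ is a sum of homogeneous terms of degree at most $4$. $\otimes=\otimes_\Bbbk$; Sweedler notation; outer structure $x(d'\otimes d'')y=xd'\otimes d''y$. A $B$-linear double bracket is a $\Bbbk$-bilinear map $A\times A\to A\otimes A$ vanishing when an argument lies in $B$, with $\{\!\{a,b\}\!\}=-\{\!\{b,a\}\!\}''\otimes\{\!\{b,a\}\!\}'$ and $\{\!\{a,bc\}\!\}=\{\!\{a,b\}\!\}c+b\{\!\{a,c\}\!\}$. Triple bracket: $\{\!\{a,b,c\}\!\}=\{\!\{a,\{\!\{b,c\}\!\}'\}\!\}\otimes\{\!\{b,c\}\!\}''+\tau\{\!\{b,\{\!\{c,a\}\!\}'\}\!\}\otimes\{\!\{c,a\}\!\}''+\tau^2\{\!\{c,\{\!\{a,b\}\!\}'\}\!\}\otimes\{\!\{a,b\}\!\}''$, $\tau(x_1\otimes x_2\otimes x_3)=x_3\otimes x_1\otimes x_2$. Quasi-Poisson: $\{\!\{a,b,c\}\!\}=\frac14\sum_{r=1,2}(ce_ra\otimes e_rb\otimes e_r-ce_ra\otimes e_r\otimes be_r-ce_r\otimes ae_rb\otimes e_r+ce_r\otimes ae_r\otimes be_r-e_ra\otimes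 e_rb\otimes e_rc+e_ra\otimes e_r\otimes be_rc+e_r\otimes ae_rb\otimes e_rc-e_r\otimes ae_r\otimes be_rc)$ for all $a,b,c$. *)

theory Defs
  imports Main
begin

text \<open>Path algebra of the quiver with vertices 1,2 and arrows t : 1 -> 2, s : 2 -> 1,
  with convention t = e1 t e2, s = e2 s e1.  A nonzero path is determined by its
  left vertex (True = vertex 1, False = vertex 2) and its length: length 0 gives e_i,
  otherwise it is the alternating word starting with t (left vertex 1) or s (left vertex 2).
  Elements of A are finitely supported coefficient functions on paths; elements of
  A (x) A, resp. A (x) A (x) A, are finitely supported coefficient functions on pairs,
  resp. triples, of paths.\<close>

type_synonym path = "bool \<times> nat"

definition rv :: "bool \<Rightarrow> nat \<Rightarrow> bool" where
  "rv b n = (if even n then b else \<not> b)"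

definition pmul :: "(path \<Rightarrow> 'k::comm_ring_1) \<Rightarrow> (path \<Rightarrow> 'k) \<Rightarrow> path \<Rightarrow> 'k" where
  "pmul x y = (\<lambda>(b, n). \<Sum>k\<in>{0..n}. x (b, k) * y (rv b k, n - k))"

definition bas :: "path \<Rightarrow> path \<Rightarrow> 'k::comm_ring_1" where
  "bas p = (\<lambda>q. if q = p then 1 else 0)"

definition qe1 :: "path \<Rightarrow> 'k::comm_ring_1" where "qe1 = bas (True, 0)"
definition qe2 :: "path \<Rightarrow> 'k::comm_ring_1" where "qe2 = bas (False, 0)"
definition qt :: "path \<Rightarrow> 'k::comm_ring_1" where "qt = bas (True, 1)"
definition qs :: "path \<Rightarrow> 'k::comm_ring_1" where "qs = bas (False, 1)"

definition finsupp :: "('a \<Rightarrow> 'k::zero) \<Rightarrow> bool" where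
  "finsupp x = finite {p. x p \<noteq> 0}"

definition inB :: "(path \<Rightarrow> 'k::zero) \<Rightarrow> bool" where
  "inB x = (\<forall>p. snd p \<noteq> 0 \<longrightarrow> x p = 0)"

definition tens2 :: "(path \<Rightarrow> 'k::comm_ring_1) \<Rightarrow> (path \<Rightarrow> 'k) \<Rightarrow> path \<times> path \<Rightarrow> 'k" where
  "tens2 x y = (\<lambda>(p, q). x p * y q)"

definition tens3 :: "(path \<Rightarrow> 'k::comm_ring_1) \<Rightarrow> (path \<Rightarrow> 'k) \<Rightarrow> (path \<Rightarrow> 'k)
    \<Rightarrow> path \<times> path \<times> path \<Rightarrow> 'k" where
  "tens3 x y z = (\<lambda>(p, q, r). x p * y q * z r)"

text \<open>Outer bimodule structure on A (x) A: x (d' (x) d'') y = x d' (x) d'' y.\<close>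
definition lmul2 :: "(path \<Rightarrow> 'k::comm_ring_1) \<Rightarrow> (path \<times> path \<Rightarrow> 'k) \<Rightarrow> path \<times> path \<Rightarrow> 'k" where
  "lmul2 b D = (\<lambda>(p, q). pmul b (\<lambda>r. D (r, q)) p)"

definition rmul2 :: "(path \<times> path \<Rightarrow> 'k::comm_ring_1) \<Rightarrow> (path \<Rightarrow> 'k) \<Rightarrow> path \<times> path \<Rightarrow> 'k" where
  "rmul2 D c = (\<lambda>(p, q). pmul (\<lambda>r. D (p, r)) c q)"

type_synonym 'k dbr = "(path \<Rightarrow> 'k) \<Rightarrow> (path \<Rightarrow> 'k) \<Rightarrow> path \<times> path \<Rightarrow> 'k"

definition double_bracket :: "'k::field dbr \<Rightarrow> bool" where
  "double_bracket br \<longleftrightarrow>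
     (\<forall>a b. finsupp a \<longrightarrow> finsupp b \<longrightarrow> finsupp (br a b)) \<and>
     (\<forall>a a' b. finsupp a \<longrightarrow> finsupp a' \<longrightarrow> finsupp b \<longrightarrow>
        br (\<lambda>p. a p + a' p) b = (\<lambda>x. br a b x + br a' b x)) \<and>
     (\<forall>a b b'. finsupp a \<longrightarrow> finsupp b \<longrightarrow> finsupp b' \<longrightarrow>
        br a (\<lambda>p. b p + b' p) = (\<lambda>x. br a b x + br a b' x)) \<and>
     (\<forall>c a b. finsupp a \<longrightarrow> finsupp b \<longrightarrow> br (\<lambda>p. c * a p) b = (\<lambda>x. c * br a b x)) \<and>
     (\<forall>c a b. finsupp a \<longrightarrow> finsupp b \<longrightarrow> br a (\<lambda>p. c * b p) = (\<lambda>x. c * br a b x)) \<and>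
     (\<forall>a b. finsupp a \<longrightarrow> finsupp b \<longrightarrow> inB a \<longrightarrow> br a b = (\<lambda>x. 0)) \<and>
     (\<forall>a b. finsupp a \<longrightarrow> finsupp b \<longrightarrow> inB b \<longrightarrow> br a b = (\<lambda>x. 0)) \<and>
     (\<forall>a b. finsupp a \<longrightarrow> finsupp b \<longrightarrow> br a b = (\<lambda>(p, q). - br b a (q, p))) \<and>
     (\<forall>a b c. finsupp a \<longrightarrow> finsupp b \<longrightarrow> finsupp c \<longrightarrow>
        br a (pmul b c) = (\<lambda>x. rmul2 (br a b) c x + lmul2 b (br a c) x))"

text \<open>The Sweedler expression {{a,{{b,c}}'}} (x) {{b,c}}'' is evaluated
  coordinatewise: for each basis path r of the last factor, the coefficient of r is
  {{a, x_r}} with x_r the element u |-> {{b,c}}(u,r) (this is the bilinear extension).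
  tau(x1 (x) x2 (x) x3) = x3 (x) x1 (x) x2.\<close>
definition triple :: "'k::field dbr \<Rightarrow> (path \<Rightarrow> 'k) \<Rightarrow> (path \<Rightarrow> 'k) \<Rightarrow> (path \<Rightarrow> 'k)
    \<Rightarrow> path \<times> path \<times> path \<Rightarrow> 'k" where
  "triple br a b c = (\<lambda>(p, q, r).
      br a (\<lambda>u. br b c (u, r)) (p, q)
    + br b (\<lambda>u. br c a (u, p)) (q, r)
    + br c (\<lambda>u. br a b (u, q)) (r, p))"

definition qpt :: "(path \<Rightarrow> 'k::field) \<Rightarrow> (path \<Rightarrow> 'k) \<Rightarrow> (path \<Rightarrow> 'k) \<Rightarrow> (path \<Rightarrow> 'k)
    \<Rightarrow> path \<times> path \<times> path \<Rightarrow> 'k" where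
  "qpt e a b c = (\<lambda>x.
       tens3 (pmul (pmul c e) a) (pmul e b) e x
     - tens3 (pmul (pmul c e) a) e (pmul b e) x
     - tens3 (pmul c e) (pmul (pmul a e) b) e x
     + tens3 (pmul c e) (pmul a e) (pmul b e) x
     - tens3 (pmul e a) (pmul e b) (pmul e c) x
     + tens3 (pmul e a) e (pmul (pmul b e) c) x
     + tens3 e (pmul (pmul a e) b) (pmul e c) x
     - tens3 e (pmul a e) (pmul (pmul b e) c) x)"

definition quasi_Poisson :: "'k::field dbr \<Rightarrow> bool" where
  "quasi_Poisson br \<longleftrightarrow> double_bracket br \<and>
     (\<forall>a b c. finsupp a \<longrightarrow> finsupp b \<longrightarrow> finsupp c \<longrightarrow>
        triple br a b c = (\<lambda>x. (1/4) * (qpt qe1 a b c x + qpt qe2 a b c x)))"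

definition deg_le4_on_gens :: "'k::field dbr \<Rightarrow> bool" where
  "deg_le4_on_gens br \<longleftrightarrow>
     (\<forall>(x, y) \<in> {(qs, qs), (qt, qt), (qt, qs)}.
        \<forall>p q. br x y (p, q) \<noteq> 0 \<longrightarrow> snd p + snd q \<le> 4)"

end

theory Submission
  imports Defs
begin

lemma rv_0[simp]: "rv b 0 = b" by (simp add: rv_def)

lemma pmul_basL: "pmul (bas (c,m)) y (b,n) = (if b = c \<and> m \<le> n then y (rv c m, n-m) else 0)"
proof -
  have "pmul (bas (c,m)) y (b,n) = (\<Sum>k\<in>{0..n}. if k = m then (if b = c then y (rv b m, n - m) else 0) else 0)"
    unfolding pmul_def bas_def prod.case by (intro sum.cong refl) (simp only: prod.inject; auto)
  also have "\<dots> = (if b = c \<and> m \<le> n then y (rv c m, n-m) else 0)"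
    by (subst sum.delta) auto
  finally show ?thesis .
qed

lemma pmul_basR: "pmul y (bas (c,m)) (b,n) = (if m \<le> n \<and> rv b (n-m) = c then y (b, n-m) else 0)"
proof -
  have "pmul y (bas (c,m)) (b,n) = (\<Sum>k\<in>{0..n}. if k = n - m then (if m \<le> n \<and> rv b (n-m) = c then y (b, n-m) else 0) else 0)"
    unfolding pmul_def bas_def prod.case
  proof (intro sum.cong refl)
    fix k assume "k \<in> {0..n}"
    then have k: "k \<le> n" by simp
    show "y (b, k) * (if (rv b k, n - k) = (c, m) then 1 else 0) =
          (if k = n - m then (if m \<le> n \<and> rv b (n-m) = c then y (b, n-m) else 0) else 0)"
    proof (cases "k = n - m \<and> m \<le> n")
      case True then show ?thesis by auto
    next
      case False
      then have "n - k \<noteq> m" using k by auto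
      then show ?thesis using False by auto
    qed
  qed
  also have "\<dots> = (if m \<le> n \<and> rv b (n-m) = c then y (b, n-m) else 0)"
    by (subst sum.delta) auto
  finally show ?thesis .
qed

lemma rv_add: "rv (rv b n) m = rv b (n+m)" by (simp add: rv_def)

lemma pmul_bas_bas: "pmul (bas (b,n)) (bas (c,m)) = (if rv b n = c then bas (b,n+m) else (\<lambda>_. 0))"
proof
  fix x :: path
  obtain b' n' where x: "x = (b',n')" by (cases x)
  show "pmul (bas (b,n)) (bas (c,m)) x = (if rv b n = c then bas (b,n+m) else (\<lambda>_. 0)) x"
    unfolding x by (simp only: pmul_basL) (auto simp: bas_def rv_add)
qed

lemma lmul2_bas: "lmul2 (bas (c,m)) D ((b,n),q) = (if b = c \<and> m \<le> n then D ((rv c m, n-m), q) else 0)"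
  by (simp add: lmul2_def pmul_basL)

lemma rmul2_bas: "rmul2 D (bas (c,m)) (p,(b,n)) = (if m \<le> n \<and> rv b (n-m) = c then D (p,(b, n-m)) else 0)"
  by (simp add: rmul2_def pmul_basR)

lemma rmul2_0: "rmul2 (\<lambda>x. 0) c = (\<lambda>x. 0)"
  by (rule ext) (auto simp: rmul2_def pmul_def)

lemma finsupp_bas: "finsupp (bas p :: path \<Rightarrow> 'a::comm_ring_1)"
proof -
  have "{q. bas p q \<noteq> (0::'a)} \<subseteq> {p}" unfolding bas_def by auto
  then show ?thesis unfolding finsupp_def by (rule finite_subset) simp
qed

lemma finsupp_sum: "finite U \<Longrightarrow> finsupp (\<lambda>p. \<Sum>u\<in>U. c u * bas u p :: 'a::comm_ring_1)"
proof -
  assume U: "finite U"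
  have "{p. (\<Sum>u\<in>U. c u * bas u p) \<noteq> (0::'a)} \<subseteq> U"
  proof (rule subsetI, rule ccontr)
    fix p assume p: "p \<in> {p. (\<Sum>u\<in>U. c u * bas u p) \<noteq> (0::'a)}" "p \<notin> U"
    have "\<forall>u\<in>U. c u * bas u p = 0" using p(2) unfolding bas_def by auto
    then have "(\<Sum>u\<in>U. c u * bas u p) = 0" by (rule sum.neutral)
    then show False using p(1) by simp
  qed
  then show ?thesis unfolding finsupp_def using U by (rule finite_subset)
qed

lemma finsupp_smul: "finsupp (\<lambda>p. c * bas u p :: 'a::comm_ring_1)"
proof -
  have "{p. c * bas u p \<noteq> (0::'a)} \<subseteq> {u}" unfolding bas_def by auto
  then show ?thesis unfolding finsupp_def by (rule finite_subset) simp
qed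

lemma finsupp_0: "finsupp (\<lambda>p. 0)" by (simp add: finsupp_def)
lemma inB_0: "inB (\<lambda>p. 0)" by (simp add: inB_def)
lemma inB_bas0: "inB (bas (b,0))" unfolding inB_def bas_def by auto

context
  fixes br :: "'k::field dbr"
  assumes db: "double_bracket br"
begin

lemma db_inB: "\<forall>a b. finsupp a \<longrightarrow> finsupp b \<longrightarrow> inB b \<longrightarrow> br a b = (\<lambda>x. 0)"
  using db by (simp only: double_bracket_def) (elim conjE, assumption)

lemma br_0r: "finsupp a \<Longrightarrow> br a (\<lambda>p. 0) = (\<lambda>x. 0)"
  using db_inB finsupp_0 inB_0 by blast

lemma br_B: "finsupp a \<Longrightarrow> br a (bas (b,0)) = (\<lambda>x. 0)"
  using db_inB finsupp_bas inB_bas0 by blast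

lemma br_leib: "finsupp a \<Longrightarrow> finsupp b \<Longrightarrow> finsupp c \<Longrightarrow>
   br a (pmul b c) = (\<lambda>x. rmul2 (br a b) c x + lmul2 b (br a c) x)"
proof -
  have H: "\<forall>a b c. finsupp a \<longrightarrow> finsupp b \<longrightarrow> finsupp c \<longrightarrow>
        br a (pmul b c) = (\<lambda>x. rmul2 (br a b) c x + lmul2 b (br a c) x)"
    using db by (simp only: double_bracket_def) (elim conjE, assumption)
  show "finsupp a \<Longrightarrow> finsupp b \<Longrightarrow> finsupp c \<Longrightarrow> br a (pmul b c) = (\<lambda>x. rmul2 (br a b) c x + lmul2 b (br a c) x)"
    by (rule H[rule_format])
qed

lemma br_anti: "finsupp a \<Longrightarrow> finsupp b \<Longrightarrow> br a b (p,q) = - br b a (q,p)"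
proof -
  assume "finsupp a" "finsupp b"
  have H: "\<forall>a b. finsupp a \<longrightarrow> finsupp b \<longrightarrow> br a b = (\<lambda>(p, q). - br b a (q, p))"
    using db by (simp only: double_bracket_def) (elim conjE, assumption)
  have "br a b = (\<lambda>(p, q). - br b a (q, p))" using H \<open>finsupp a\<close> \<open>finsupp b\<close> by blast
  from fun_cong[OF this, of "(p,q)"] show ?thesis by simp
qed

lemma br_add: "finsupp a \<Longrightarrow> finsupp b \<Longrightarrow> finsupp b' \<Longrightarrow>
        br a (\<lambda>p. b p + b' p) = (\<lambda>x. br a b x + br a b' x)"
proof -
  have H: "\<forall>a b b'. finsupp a \<longrightarrow> finsupp b \<longrightarrow> finsupp b' \<longrightarrow>
        br a (\<lambda>p. b p + b' p) = (\<lambda>x. br a b x + br a b' x)"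
    using db by (simp only: double_bracket_def) (elim conjE, assumption)
  show "finsupp a \<Longrightarrow> finsupp b \<Longrightarrow> finsupp b' \<Longrightarrow> br a (\<lambda>p. b p + b' p) = (\<lambda>x. br a b x + br a b' x)"
    by (rule H[rule_format])
qed

lemma br_smul: "finsupp a \<Longrightarrow> finsupp b \<Longrightarrow> br a (\<lambda>p. c * b p) = (\<lambda>x. c * br a b x)"
proof -
  have H: "\<forall>c a b. finsupp a \<longrightarrow> finsupp b \<longrightarrow> br a (\<lambda>p. c * b p) = (\<lambda>x. c * br a b x)"
    using db by (simp only: double_bracket_def) (elim conjE, assumption)
  show "finsupp a \<Longrightarrow> finsupp b \<Longrightarrow> br a (\<lambda>p. c * b p) = (\<lambda>x. c * br a b x)"
    by (rule H[rule_format])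
qed

lemma br_sum: "finite U \<Longrightarrow> finsupp a \<Longrightarrow>
   br a (\<lambda>p. \<Sum>u\<in>U. c u * bas u p) = (\<lambda>z. \<Sum>u\<in>U. c u * br a (bas u) z)"
proof (induction U rule: finite_induct)
  case empty then show ?case by (simp add: br_0r)
next
  case (insert v U)
  have "br a (\<lambda>p. \<Sum>u\<in>insert v U. c u * bas u p) = br a (\<lambda>p. (\<lambda>p. c v * bas v p) p + (\<lambda>p. \<Sum>u\<in>U. c u * bas u p) p)"
    using insert by simp
  also have "\<dots> = (\<lambda>x. br a (\<lambda>p. c v * bas v p) x + br a (\<lambda>p. \<Sum>u\<in>U. c u * bas u p) x)"
    by (rule br_add) (use insert finsupp_smul[of "c v" v] finsupp_sum in auto)
  also have "\<dots> = (\<lambda>z. \<Sum>u\<in>insert v U. c u * br a (bas u) z)"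
    using insert by (simp add: br_smul finsupp_bas)
  finally show ?case .
qed

lemma br_decomp: assumes "finite U" "finsupp a" "\<forall>u. u \<notin> U \<longrightarrow> x u = 0"
  shows "br a x = (\<lambda>z. \<Sum>u\<in>U. x u * br a (bas u) z)"
proof -
  have "x = (\<lambda>p. \<Sum>u\<in>U. x u * bas u p)"
  proof
    fix p show "x p = (\<Sum>u\<in>U. x u * bas u p)"
    proof (cases "p \<in> U")
      case True
      have "(\<Sum>u\<in>U. x u * bas u p) = (\<Sum>u\<in>U. if u = p then x p else 0)"
        by (rule sum.cong) (auto simp: bas_def)
      then show ?thesis using True assms(1) by simp
    next
      case False
      have "\<forall>u\<in>U. x u * bas u p = 0" using False by (auto simp: bas_def)
      then have "(\<Sum>u\<in>U. x u * bas u p) = 0" by (rule sum.neutral)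
      then show ?thesis using assms(3)[rule_format, OF False] by simp
    qed
  qed
  then have "br a x = br a (\<lambda>p. \<Sum>u\<in>U. x u * bas u p)" by (rule arg_cong)
  also have "\<dots> = (\<lambda>z. \<Sum>u\<in>U. x u * br a (bas u) z)" by (rule br_sum[OF assms(1,2)])
  finally show ?thesis .
qed

lemma lvert: assumes "finsupp a" "br a (bas (c,m)) ((b,n),q) \<noteq> 0" shows "b = c"
proof (rule ccontr)
  assume bc: "b \<noteq> c"
  have e: "pmul (bas (c,0)) (bas (c,m)) = bas (c,m)" by (simp add: pmul_bas_bas)
  have "br a (pmul (bas (c,0)) (bas (c,m))) = (\<lambda>x. rmul2 (br a (bas (c,0))) (bas (c,m)) x + lmul2 (bas (c,0)) (br a (bas (c,m))) x)"
    by (rule br_leib) (rule assms(1), rule finsupp_bas, rule finsupp_bas)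
  then have eq: "br a (bas (c,m)) = (\<lambda>x. rmul2 (br a (bas (c,0))) (bas (c,m)) x + lmul2 (bas (c,0)) (br a (bas (c,m))) x)"
    by (simp only: e)
  have eqp: "br a (bas (c,m)) ((b,n),q) = rmul2 (br a (bas (c,0))) (bas (c,m)) ((b,n),q) + lmul2 (bas (c,0)) (br a (bas (c,m))) ((b,n),q)"
    using eq by (rule fun_cong)
  have r0: "rmul2 (br a (bas (c,0))) (bas (c,m)) ((b,n),q) = 0" by (simp add: br_B assms(1) rmul2_0)
  have l0: "lmul2 (bas (c,0)) (br a (bas (c,m))) ((b,n),q) = 0" using bc by (simp add: lmul2_bas)
  have "br a (bas (c,m)) ((b,n),q) = 0" by (simp only: eqp r0 l0 add_0)
  then show False using assms(2) by simp
qed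

lemma rvert: assumes "finsupp a" "br a (bas (c,m)) (p,(b,n)) \<noteq> 0" shows "rv b n = rv c m"
proof (rule ccontr)
  assume bc: "rv b n \<noteq> rv c m"
  have e: "pmul (bas (c,m)) (bas (rv c m,0)) = bas (c,m)" by (simp add: pmul_bas_bas)
  have "br a (pmul (bas (c,m)) (bas (rv c m,0))) = (\<lambda>x. rmul2 (br a (bas (c,m))) (bas (rv c m,0)) x + lmul2 (bas (c,m)) (br a (bas (rv c m,0))) x)"
    by (rule br_leib) (rule assms(1), rule finsupp_bas, rule finsupp_bas)
  then have eq: "br a (bas (c,m)) = (\<lambda>x. rmul2 (br a (bas (c,m))) (bas (rv c m,0)) x + lmul2 (bas (c,m)) (br a (bas (rv c m,0))) x)"
    by (simp only: e)
  have eqp: "br a (bas (c,m)) (p,(b,n)) = rmul2 (br a (bas (c,m))) (bas (rv c m,0)) (p,(b,n)) + lmul2 (bas (c,m)) (br a (bas (rv c m,0))) (p,(b,n))"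
    using eq by (rule fun_cong)
  have r0: "lmul2 (bas (c,m)) (br a (bas (rv c m,0))) (p,(b,n)) = 0" by (simp add: br_B assms(1) lmul2_def pmul_def)
  have l0: "rmul2 (br a (bas (c,m))) (bas (rv c m,0)) (p,(b,n)) = 0" using bc by (simp add: rmul2_bas)
  have "br a (bas (c,m)) (p,(b,n)) = 0" by (simp only: eqp r0 l0 add_0)
  then show False using assms(2) by simp
qed

end

lemma rv_simps[simp]: "rv True n = even n" "rv False n = odd n" by (simp_all add: rv_def)

context
  fixes br :: "'k::field dbr"
  assumes db: "double_bracket br"
begin

lemma shape: assumes "br (bas (c,1)) (bas (d,1)) ((x,n),(y,m)) \<noteq> 0"
  shows "x = d \<and> rv y m = rv d 1 \<and> y = c \<and> rv x n = rv c 1"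
proof -
  have a: "br (bas (d,1)) (bas (c,1)) ((y,m),(x,n)) \<noteq> 0"
    using assms br_anti[OF db finsupp_bas finsupp_bas, of "(c,1)" "(d,1)" "(x,n)" "(y,m)"] by simp
  show ?thesis
    using lvert[OF db finsupp_bas assms] rvert[OF db finsupp_bas assms]
          lvert[OF db finsupp_bas a] rvert[OF db finsupp_bas a] by blast
qed

lemma leib_bas: "finsupp a \<Longrightarrow> br a (bas (b, n+m)) =
   (\<lambda>x. rmul2 (br a (bas (b,n))) (bas (rv b n, m)) x + lmul2 (bas (b,n)) (br a (bas (rv b n, m))) x)"
proof -
  assume a: "finsupp a"
  have e: "pmul (bas (b,n)) (bas (rv b n, m)) = bas (b, n+m)" by (simp add: pmul_bas_bas)
  have "br a (pmul (bas (b,n)) (bas (rv b n, m))) =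
   (\<lambda>x. rmul2 (br a (bas (b,n))) (bas (rv b n, m)) x + lmul2 (bas (b,n)) (br a (bas (rv b n, m))) x)"
    by (rule br_leib[OF db a finsupp_bas finsupp_bas])
  then show ?thesis by (simp only: e)
qed

lemma leib_bas': "k = n + m \<Longrightarrow> finsupp a \<Longrightarrow> br a (bas (b, k)) =
   (\<lambda>x. rmul2 (br a (bas (b,n))) (bas (rv b n, m)) x + lmul2 (bas (b,n)) (br a (bas (rv b n, m))) x)"
  using leib_bas by blast

end

lemma sq_quarter: "(x::'k::field_char_0) * x = 1/4 \<Longrightarrow> x = 1/2 \<or> x = -1/2"
proof -
  assume h: "x * x = 1/4"
  have "(x - 1/2) * (x + 1/2) = 0" using h by (simp add: algebra_simps)
  then show ?thesis by (auto simp: eq_neg_iff_add_eq_0)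
qed

lemma alg:
  fixes g a1 a2 f b1 b2 L M :: "'k::field_char_0"
  assumes E1: "b1 * b1 = 0" and E2: "b2 * b2 = 0" and E3: "L * M = f * b2 + L * b2"
  and E4: "g * a1 = g * a2" and E5: "a2 * a2 + g * b2 - g * f + L * g = 1/4"
  and E6: "a1 * a1 + g * b1 - g * f - L * g = 1/4" and E7: "a1 * f - a2 * f = L * a2 + L * a1"
  and E8: "g * b1 + L * g = g * b2" and E9: "g * b2 = g * b1 + M * g"
  and E10: "a2 * f + M * a2 + M * a1 = a1 * f"
  shows "b1 = 0 \<and> b2 = 0 \<and> (
     (L = 0 \<and> M = 0 \<and> a1 = a2 \<and> a1 * a1 = 1/4 + g * f)
   \<or> (L * M = 0 \<and> g = 0 \<and> f = 0 \<and> a2 = - a1 \<and> (a1 = 1/2 \<or> a1 = -1/2)))"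
proof -
  have b1: "b1 = 0" using E1 by simp
  have b2: "b2 = 0" using E2 by simp
  have LM: "L * M = 0" using E3 b2 by simp
  have Lg: "L * g = 0" using E8 b1 b2 by simp
  have Mg: "M * g = 0" using E9 b1 b2 by simp
  have A1: "a1 * a1 = 1/4 + g * f" using E6 b1 Lg by (simp add: algebra_simps; (simp add: field_simps)?)
  have A2: "a2 * a2 = 1/4 + g * f" using E5 b2 Lg by (simp add: algebra_simps; (simp add: field_simps)?)
  show ?thesis
  proof (cases "a1 = a2")
    case True
    have L0: "L = 0"
    proof (rule ccontr)
      assume "L \<noteq> 0"
      then have "a1 = 0" "g = 0" using E7 True Lg by (auto simp: algebra_simps)
      then show False using A1 by simp
    qed
    have M0: "M = 0"
    proof (rule ccontr)
      assume "M \<noteq> 0"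
      then have "a1 = 0" "g = 0" using E10 True Mg by (auto simp: algebra_simps)
      then show False using A1 by simp
    qed
    show ?thesis using b1 b2 L0 M0 True A1 by simp
  next
    case False
    have g0: "g = 0" using E4 False by simp
    have "(a1 - a2) * (a1 + a2) = 0" using A1 A2 by (simp add: algebra_simps)
    then have a2: "a2 = - a1" using False by (auto simp: eq_neg_iff_add_eq_0 add.commute)
    have "(a1 - a2) * f = 0" using E7 a2 by (simp add: algebra_simps)
    then have f0: "f = 0" using False by simp
    have "a1 * a1 = 1/4" using A1 g0 by simp
    then have "a1 = 1/2 \<or> a1 = -1/2" by (rule sq_quarter)
    then show ?thesis using b1 b2 LM g0 f0 a2 by simp
  qed
qed

lemma bas_eval: "bas p q = (if q = p then 1 else 0)" by (simp add: bas_def)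

theorem proposition4p4:
  fixes br :: "'k::field_char_0 dbr"
  assumes qp: "quasi_Poisson br" and dg: "deg_le4_on_gens br"
  shows "(br qs qs = (\<lambda>x. 0) \<and> br qt qt = (\<lambda>x. 0) \<and>
           ((\<exists>\<delta>. (\<delta> = 1 \<or> \<delta> = -1) \<and>
              br qt qs = (\<lambda>x. (\<delta>/2) * (tens2 (pmul qs qt) qe1 x - tens2 qe2 (pmul qt qs) x)))
          \<or> (\<exists>\<alpha> \<gamma> \<phi>. \<alpha>^2 = 1/4 + \<gamma> * \<phi> \<and>
              br qt qs = (\<lambda>x. \<gamma> * tens2 qe2 qe1 x + \<phi> * tens2 (pmul qs qt) (pmul qt qs) x
                 + \<alpha> * (tens2 (pmul qs qt) qe1 x + tens2 qe2 (pmul qt qs) x)))))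
       \<or> (br qs qs = (\<lambda>x. 0) \<and>
          (\<exists>lam. lam \<noteq> 0 \<and> br qt qt = (\<lambda>x. lam * (tens2 (pmul (pmul qt qs) qt) qt x
                                              - tens2 qt (pmul (pmul qt qs) qt) x))) \<and>
          (\<exists>\<delta>. (\<delta> = 1 \<or> \<delta> = -1) \<and>
              br qt qs = (\<lambda>x. (\<delta>/2) * (tens2 (pmul qs qt) qe1 x - tens2 qe2 (pmul qt qs) x))))
       \<or> (br qt qt = (\<lambda>x. 0) \<and>
          (\<exists>lam. lam \<noteq> 0 \<and> br qs qs = (\<lambda>x. lam * (tens2 (pmul (pmul qs qt) qs) qs x
                                              - tens2 qs (pmul (pmul qs qt) qs) x))) \<and>
          (\<exists>\<delta>. (\<delta> = 1 \<or> \<delta> = -1) \<and>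
              br qt qs = (\<lambda>x. (\<delta>/2) * (tens2 (pmul qs qt) qe1 x - tens2 qe2 (pmul qt qs) x))))"
proof -
  have db: "double_bracket br" using qp unfolding quasi_Poisson_def by blast
  let ?t = "bas (True,1) :: path \<Rightarrow> 'k" and ?s = "bas (False,1) :: path \<Rightarrow> 'k"
  have degX: "\<And>p q. br ?t ?s (p,q) \<noteq> 0 \<Longrightarrow> snd p + snd q \<le> 4"
    using dg unfolding deg_le4_on_gens_def qt_def qs_def by auto
  have degT: "\<And>p q. br ?t ?t (p,q) \<noteq> 0 \<Longrightarrow> snd p + snd q \<le> 4"
    using dg unfolding deg_le4_on_gens_def qt_def qs_def by auto
  have degS: "\<And>p q. br ?s ?s (p,q) \<noteq> 0 \<Longrightarrow> snd p + snd q \<le> 4"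
    using dg unfolding deg_le4_on_gens_def qt_def qs_def by auto
  define g where "g = br ?t ?s ((False,0),(True,0))"
  define a1 where "a1 = br ?t ?s ((False,2),(True,0))"
  define a2 where "a2 = br ?t ?s ((False,0),(True,2))"
  define f where "f = br ?t ?s ((False,2),(True,2))"
  define b1 where "b1 = br ?t ?s ((False,4),(True,0))"
  define b2 where "b2 = br ?t ?s ((False,0),(True,4))"
  define L where "L = br ?t ?t ((True,3),(True,1))"
  define M where "M = br ?s ?s ((False,3),(False,1))"
  have hX: "br ?t ?s = (\<lambda>(p,q). g * bas (False,0) p * bas (True,0) q + a1 * bas (False,2) p * bas (True,0) q
     + a2 * bas (False,0) p * bas (True,2) q + f * bas (False,2) p * bas (True,2) q
     + b1 * bas (False,4) p * bas (True,0) q + b2 * bas (False,0) p * bas (True,4) q)"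
  proof (rule ext)
    fix z :: "path \<times> path"
    obtain x n y m where z: "z = ((x,n),(y,m))" by (metis prod.exhaust)
    show "br ?t ?s z = (\<lambda>(p,q). g * bas (False,0) p * bas (True,0) q + a1 * bas (False,2) p * bas (True,0) q
     + a2 * bas (False,0) p * bas (True,2) q + f * bas (False,2) p * bas (True,2) q
     + b1 * bas (False,4) p * bas (True,0) q + b2 * bas (False,0) p * bas (True,4) q) z"
    proof (cases "x = False \<and> y = True \<and> (n = 0 \<and> m = 0 \<or> n = 2 \<and> m = 0 \<or> n = 0 \<and> m = 2 \<or> n = 2 \<and> m = 2 \<or> n = 4 \<and> m = 0 \<or> n = 0 \<and> m = 4)")
      case True then show ?thesis unfolding z by (auto simp: bas_def g_def a1_def a2_def f_def b1_def b2_def)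
    next
      case False
      have "br ?t ?s z = 0"
      proof (rule ccontr)
        assume nz: "br ?t ?s z \<noteq> 0"
        have d: "n + m \<le> 4" using degX[of "(x,n)" "(y,m)"] nz unfolding z by simp
        have "x = False \<and> rv y m = rv False 1 \<and> y = True \<and> rv x n = rv True 1"
          using shape[OF db] nz unfolding z by blast
        then have xy: "x = False" "y = True" and ev: "even n" "even m" by auto
        have "n = 0 \<and> m = 0 \<or> n = 2 \<and> m = 0 \<or> n = 0 \<and> m = 2 \<or> n = 2 \<and> m = 2 \<or> n = 4 \<and> m = 0 \<or> n = 0 \<and> m = 4"
          using d ev by presburger
        with xy False show False by blast
      qed
      moreover have "(\<lambda>(p,q). g * bas (False,0) p * bas (True,0) q + a1 * bas (False,2) p * bas (True,0) q
         + a2 * bas (False,0) p * bas (True,2) q + f * bas (False,2) p * bas (True,2) q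
         + b1 * bas (False,4) p * bas (True,0) q + b2 * bas (False,0) p * bas (True,4) q) z = (0::'k)"
        using False unfolding z by (auto simp: bas_def)
      ultimately show ?thesis by simp
    qed
  qed
  have hT: "br ?t ?t = (\<lambda>(p,q). L * bas (True,3) p * bas (True,1) q - L * bas (True,1) p * bas (True,3) q)"
  proof (rule ext)
    fix z :: "path \<times> path"
    obtain x n y m where z: "z = ((x,n),(y,m))" by (metis prod.exhaust)
    have anti: "br ?t ?t ((x,n),(y,m)) = - br ?t ?t ((y,m),(x,n))"
      by (rule br_anti[OF db finsupp_bas finsupp_bas])
    show "br ?t ?t z = (\<lambda>(p,q). L * bas (True,3) p * bas (True,1) q - L * bas (True,1) p * bas (True,3) q) z"
    proof (cases "x = True \<and> y = True \<and> (n = 1 \<and> m = 1 \<or> n = 3 \<and> m = 1 \<or> n = 1 \<and> m = 3)")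
      case True
      then consider "x = True" "y = True" "n = 1" "m = 1" | "x = True" "y = True" "n = 3" "m = 1"
        | "x = True" "y = True" "n = 1" "m = 3" by blast
      then show ?thesis
      proof cases
        case 1 then have "br ?t ?t z = 0" using anti unfolding z by (simp add: eq_neg_iff_add_eq_0)
        then show ?thesis unfolding z using 1 by (simp add: bas_def)
      next
        case 2 then show ?thesis unfolding z by (simp add: bas_def L_def)
      next
        case 3 then show ?thesis unfolding z using anti by (simp add: bas_def L_def)
      qed
    next
      case False
      have "br ?t ?t z = 0"
      proof (rule ccontr)
        assume nz: "br ?t ?t z \<noteq> 0"
        have d: "n + m \<le> 4" using degT[of "(x,n)" "(y,m)"] nz unfolding z by simp
        have "x = True \<and> rv y m = rv True 1 \<and> y = True \<and> rv x n = rv True 1"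
          using shape[OF db] nz unfolding z by blast
        then have xy: "x = True" "y = True" and ev: "odd n" "odd m" by auto
        have "n = 1 \<and> m = 1 \<or> n = 3 \<and> m = 1 \<or> n = 1 \<and> m = 3"
          using d ev by presburger
        with xy False show False by blast
      qed
      moreover have "(\<lambda>(p,q). L * bas (True,3) p * bas (True,1) q - L * bas (True,1) p * bas (True,3) q) z = (0::'k)"
        using False unfolding z by (auto simp: bas_def)
      ultimately show ?thesis by simp
    qed
  qed
  have hS: "br ?s ?s = (\<lambda>(p,q). M * bas (False,3) p * bas (False,1) q - M * bas (False,1) p * bas (False,3) q)"
  proof (rule ext)
    fix z :: "path \<times> path"
    obtain x n y m where z: "z = ((x,n),(y,m))" by (metis prod.exhaust)
    have anti: "br ?s ?s ((x,n),(y,m)) = - br ?s ?s ((y,m),(x,n))"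
      by (rule br_anti[OF db finsupp_bas finsupp_bas])
    show "br ?s ?s z = (\<lambda>(p,q). M * bas (False,3) p * bas (False,1) q - M * bas (False,1) p * bas (False,3) q) z"
    proof (cases "x = False \<and> y = False \<and> (n = 1 \<and> m = 1 \<or> n = 3 \<and> m = 1 \<or> n = 1 \<and> m = 3)")
      case True
      then consider "x = False" "y = False" "n = 1" "m = 1" | "x = False" "y = False" "n = 3" "m = 1"
        | "x = False" "y = False" "n = 1" "m = 3" by blast
      then show ?thesis
      proof cases
        case 1 then have "br ?s ?s z = 0" using anti unfolding z by (simp add: eq_neg_iff_add_eq_0)
        then show ?thesis unfolding z using 1 by (simp add: bas_def)
      next
        case 2 then show ?thesis unfolding z by (simp add: bas_def M_def)
      next
        case 3 then show ?thesis unfolding z using anti by (simp add: bas_def M_def)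
      qed
    next
      case False
      have "br ?s ?s z = 0"
      proof (rule ccontr)
        assume nz: "br ?s ?s z \<noteq> 0"
        have d: "n + m \<le> 4" using degS[of "(x,n)" "(y,m)"] nz unfolding z by simp
        have "x = False \<and> rv y m = rv False 1 \<and> y = False \<and> rv x n = rv False 1"
          using shape[OF db] nz unfolding z by blast
        then have xy: "x = False" "y = False" and ev: "odd n" "odd m" by auto
        have "n = 1 \<and> m = 1 \<or> n = 3 \<and> m = 1 \<or> n = 1 \<and> m = 3"
          using d ev by presburger
        with xy False show False by blast
      qed
      moreover have "(\<lambda>(p,q). M * bas (False,3) p * bas (False,1) q - M * bas (False,1) p * bas (False,3) q) z = (0::'k)"
        using False unfolding z by (auto simp: bas_def)
      ultimately show ?thesis by simp
    qed
  qed
  have hY: "br ?s ?t = (\<lambda>(p,q). - (g * bas (False,0) q * bas (True,0) p + a1 * bas (False,2) q * bas (True,0) p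
     + a2 * bas (False,0) q * bas (True,2) p + f * bas (False,2) q * bas (True,2) p
     + b1 * bas (False,4) q * bas (True,0) p + b2 * bas (False,0) q * bas (True,4) p))"
  proof (rule ext)
    fix z :: "path \<times> path"
    obtain p q where z: "z = (p,q)" by (metis prod.exhaust)
    have "br ?s ?t (p,q) = - br ?t ?s (q,p)" by (rule br_anti[OF db finsupp_bas finsupp_bas])
    then show "br ?s ?t z = (\<lambda>(p,q). - (g * bas (False,0) q * bas (True,0) p + a1 * bas (False,2) q * bas (True,0) p
     + a2 * bas (False,0) q * bas (True,2) p + f * bas (False,2) q * bas (True,2) p
     + b1 * bas (False,4) q * bas (True,0) p + b2 * bas (False,0) q * bas (True,4) p)) z"
      unfolding z by (simp only: hX prod.case)
  qed
  have L1: "br ?t (bas (False,2)) = (\<lambda>x. rmul2 (br ?t ?s) ?t x + lmul2 ?s (br ?t ?t) x)"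
    using leib_bas'[OF db _ finsupp_bas, of 2 1 1 "(True,1)" False] by simp
  have L2: "br ?t (bas (False,4)) = (\<lambda>x. rmul2 (br ?t (bas (False,2))) (bas (False,2)) x + lmul2 (bas (False,2)) (br ?t (bas (False,2))) x)"
    using leib_bas'[OF db _ finsupp_bas, of 4 2 2 "(True,1)" False] by simp
  have L3: "br ?t (bas (True,2)) = (\<lambda>x. rmul2 (br ?t ?t) ?s x + lmul2 ?t (br ?t ?s) x)"
    using leib_bas'[OF db _ finsupp_bas, of 2 1 1 "(True,1)" True] by simp
  have L4: "br ?t (bas (True,4)) = (\<lambda>x. rmul2 (br ?t (bas (True,2))) (bas (True,2)) x + lmul2 (bas (True,2)) (br ?t (bas (True,2))) x)"
    using leib_bas'[OF db _ finsupp_bas, of 4 2 2 "(True,1)" True] by simp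
  have L5: "br ?s (bas (True,2)) = (\<lambda>x. rmul2 (br ?s ?t) ?s x + lmul2 ?t (br ?s ?s) x)"
    using leib_bas'[OF db _ finsupp_bas, of 2 1 1 "(False,1)" True] by simp
  have L6: "br ?s (bas (True,4)) = (\<lambda>x. rmul2 (br ?s (bas (True,2))) (bas (True,2)) x + lmul2 (bas (True,2)) (br ?s (bas (True,2))) x)"
    using leib_bas'[OF db _ finsupp_bas, of 4 2 2 "(False,1)" True] by simp
  have L7: "br ?s (bas (True,3)) = (\<lambda>x. rmul2 (br ?s (bas (True,2))) ?t x + lmul2 (bas (True,2)) (br ?s ?t) x)"
    using leib_bas'[OF db _ finsupp_bas, of 3 2 1 "(False,1)" True] by simp
  have L8: "br ?t (bas (False,3)) = (\<lambda>x. rmul2 (br ?t (bas (False,2))) ?s x + lmul2 (bas (False,2)) (br ?t ?s) x)"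
    using leib_bas'[OF db _ finsupp_bas, of 3 2 1 "(True,1)" False] by simp
  have L9: "br ?s (bas (False,2)) = (\<lambda>x. rmul2 (br ?s ?s) ?t x + lmul2 ?s (br ?s ?t) x)"
    using leib_bas'[OF db _ finsupp_bas, of 2 1 1 "(False,1)" False] by simp
  have L10: "br ?s (bas (False,4)) = (\<lambda>x. rmul2 (br ?s (bas (False,2))) (bas (False,2)) x + lmul2 (bas (False,2)) (br ?s (bas (False,2))) x)"
    using leib_bas'[OF db _ finsupp_bas, of 4 2 2 "(False,1)" False] by simp
  have DX: "\<And>a r. finsupp a \<Longrightarrow> br a (\<lambda>u. br ?t ?s (u,r)) = (\<lambda>z. \<Sum>u\<in>{(False,0),(False,2),(False,4)}. br ?t ?s (u,r) * br a (bas u) z)"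
    by (rule br_decomp[OF db], simp, assumption, unfold hX, auto simp: bas_eval)
  have DY: "\<And>a r. finsupp a \<Longrightarrow> br a (\<lambda>u. br ?s ?t (u,r)) = (\<lambda>z. \<Sum>u\<in>{(True,0),(True,2),(True,4)}. br ?s ?t (u,r) * br a (bas u) z)"
    by (rule br_decomp[OF db], simp, assumption, unfold hY, auto simp: bas_eval)
  have DT: "\<And>a r. finsupp a \<Longrightarrow> br a (\<lambda>u. br ?t ?t (u,r)) = (\<lambda>z. \<Sum>u\<in>{(True,1),(True,3)}. br ?t ?t (u,r) * br a (bas u) z)"
    by (rule br_decomp[OF db], simp, assumption, unfold hT, auto simp: bas_eval)
  have DS: "\<And>a r. finsupp a \<Longrightarrow> br a (\<lambda>u. br ?s ?s (u,r)) = (\<lambda>z. \<Sum>u\<in>{(False,1),(False,3)}. br ?s ?s (u,r) * br a (bas u) z)"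
    by (rule br_decomp[OF db], simp, assumption, unfold hS, auto simp: bas_eval)
  have QP: "\<And>a b c. finsupp a \<Longrightarrow> finsupp b \<Longrightarrow> finsupp c \<Longrightarrow>
        triple br a b c = (\<lambda>x. (1/4) * (qpt qe1 a b c x + qpt qe2 a b c x))"
    using qp unfolding quasi_Poisson_def by blast
  have QP1: "\<And>P. triple br ?t ?t ?s P = (1/4) * (qpt qe1 ?t ?t ?s P + qpt qe2 ?t ?t ?s P)"
    using QP[OF finsupp_bas finsupp_bas finsupp_bas] by simp
  have QP2: "\<And>P. triple br ?t ?s ?s P = (1/4) * (qpt qe1 ?t ?s ?s P + qpt qe2 ?t ?s ?s P)"
    using QP[OF finsupp_bas finsupp_bas finsupp_bas] by simp
  have TR1: "\<And>p q r. triple br ?t ?t ?s (p,q,r) =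
      (\<Sum>u\<in>{(False,0),(False,2),(False,4)}. br ?t ?s (u,r) * br ?t (bas u) (p,q))
    + (\<Sum>u\<in>{(True,0),(True,2),(True,4)}. br ?s ?t (u,p) * br ?t (bas u) (q,r))
    + (\<Sum>u\<in>{(True,1),(True,3)}. br ?t ?t (u,q) * br ?s (bas u) (r,p))"
    by (simp only: triple_def prod.case DX DY DT finsupp_bas)
  have TR2: "\<And>p q r. triple br ?t ?s ?s (p,q,r) =
      (\<Sum>u\<in>{(False,1),(False,3)}. br ?s ?s (u,r) * br ?t (bas u) (p,q))
    + (\<Sum>u\<in>{(True,0),(True,2),(True,4)}. br ?s ?t (u,p) * br ?s (bas u) (q,r))
    + (\<Sum>u\<in>{(False,0),(False,2),(False,4)}. br ?t ?s (u,q) * br ?s (bas u) (r,p))"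
    by (simp only: triple_def prod.case DX DY DS finsupp_bas)
  note ev = hX[simplified] hY[simplified] hT[simplified] hS[simplified] L1[simplified] L2[simplified] L3[simplified] L4[simplified] L5[simplified] L6[simplified] L7[simplified] L8[simplified] L9[simplified] L10[simplified] br_B[OF db finsupp_bas] rmul2_bas lmul2_bas bas_eval
     qpt_def tens3_def pmul_bas_bas qe1_def qe2_def
  have E1: "b1 * b1 = 0"
    using QP1[of "((False,6),(True,1),(True,0))"] unfolding TR1 by (simp add: ev)
  have E2: "b2 * b2 = 0"
    using QP1[of "((False,0),(True,1),(True,6))"] unfolding TR1 by (simp add: ev algebra_simps)
  have E3: "L * M = f * b2 + L * b2"
    using QP1[of "((False,2),(True,1),(True,4))"] unfolding TR1 by (simp add: ev algebra_simps)
  have E4: "g * a1 = g * a2"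
    using QP1[of "((False,0),(True,1),(True,0))"] unfolding TR1 by (simp add: ev algebra_simps)
  have E5: "a2 * a2 + g * b2 - g * f + L * g = 1/4"
    using QP1[of "((False,0),(True,1),(True,2))"] unfolding TR1 by (simp add: ev algebra_simps; (simp add: field_simps)?)
  have E6: "a1 * a1 + g * b1 - g * f - L * g = 1/4"
    using QP1[of "((False,2),(True,1),(True,0))"] unfolding TR1 by (simp add: ev algebra_simps; (simp add: field_simps)?)
  have E7: "a1 * f - a2 * f = L * a2 + L * a1"
    using QP1[of "((False,2),(True,1),(True,2))"] unfolding TR1 by (simp add: ev algebra_simps)
  have E8: "g * b1 + L * g = g * b2"
    using QP1[of "((False,0),(True,3),(True,0))"] unfolding TR1 by (simp add: ev algebra_simps)
  have E9: "g * b2 = g * b1 + M * g"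
    using QP2[of "((False,0),(True,0),(False,3))"] unfolding TR2 by (simp add: ev algebra_simps)
  have E10: "a2 * f + M * a2 + M * a1 = a1 * f"
    using QP2[of "((False,2),(True,2),(False,1))"] unfolding TR2 by (simp add: ev algebra_simps)
  have AL: "b1 = 0 \<and> b2 = 0 \<and> (
     (L = 0 \<and> M = 0 \<and> a1 = a2 \<and> a1 * a1 = 1/4 + g * f)
   \<or> (L * M = 0 \<and> g = 0 \<and> f = 0 \<and> a2 = - a1 \<and> (a1 = 1/2 \<or> a1 = -1/2)))"
    by (rule alg[OF E1 E2 E3 E4 E5 E6 E7 E8 E9 E10])
  then have b1: "b1 = 0" and b2: "b2 = 0" by auto
  have FX: "br qt qs = (\<lambda>x. g * tens2 qe2 qe1 x + f * tens2 (pmul qs qt) (pmul qt qs) x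
      + a1 * tens2 (pmul qs qt) qe1 x + a2 * tens2 qe2 (pmul qt qs) x)"
    unfolding qt_def qs_def qe1_def qe2_def hX b1 b2
    by (auto simp: fun_eq_iff tens2_def pmul_bas_bas bas_eval)
  have FT: "br qt qt = (\<lambda>x. L * (tens2 (pmul (pmul qt qs) qt) qt x - tens2 qt (pmul (pmul qt qs) qt) x))"
    unfolding qt_def qs_def hT
    by (auto simp: fun_eq_iff tens2_def pmul_bas_bas bas_eval)
  have FS: "br qs qs = (\<lambda>x. M * (tens2 (pmul (pmul qs qt) qs) qs x - tens2 qs (pmul (pmul qs qt) qs) x))"
    unfolding qt_def qs_def hS
    by (auto simp: fun_eq_iff tens2_def pmul_bas_bas bas_eval)
  from AL consider (c1) "L = 0" "M = 0" "a1 = a2" "a1 * a1 = 1/4 + g * f"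
    | (c2) "L * M = 0" "g = 0" "f = 0" "a2 = - a1" "a1 = 1/2 \<or> a1 = -1/2" by blast
  then show ?thesis
  proof cases
    case c1
    have "br qt qs = (\<lambda>x. g * tens2 qe2 qe1 x + f * tens2 (pmul qs qt) (pmul qt qs) x
                 + a1 * (tens2 (pmul qs qt) qe1 x + tens2 qe2 (pmul qt qs) x))"
      unfolding FX c1(3) by (simp add: algebra_simps)
    moreover have "a1^2 = 1/4 + g * f" using c1(4) by (simp add: power2_eq_square)
    ultimately have "\<exists>\<alpha> \<gamma> \<phi>. \<alpha>^2 = 1/4 + \<gamma> * \<phi> \<and>
              br qt qs = (\<lambda>x. \<gamma> * tens2 qe2 qe1 x + \<phi> * tens2 (pmul qs qt) (pmul qt qs) x
                 + \<alpha> * (tens2 (pmul qs qt) qe1 x + tens2 qe2 (pmul qt qs) x))" by blast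
    moreover have "br qs qs = (\<lambda>x. 0)" unfolding FS c1(2) by simp
    moreover have "br qt qt = (\<lambda>x. 0)" unfolding FT c1(1) by simp
    ultimately show ?thesis by blast
  next
    case c2
    define d :: 'k where "d = 2 * a1"
    have d: "d = 1 \<or> d = -1" using c2(5) unfolding d_def by (elim disjE) (simp_all add: mult.commute)
    have X: "br qt qs = (\<lambda>x. (d/2) * (tens2 (pmul qs qt) qe1 x - tens2 qe2 (pmul qt qs) x))"
      unfolding FX c2(2,3,4) d_def by (simp add: algebra_simps)
    have XX: "\<exists>\<delta>. (\<delta> = 1 \<or> \<delta> = -1) \<and>
              br qt qs = (\<lambda>x. (\<delta>/2) * (tens2 (pmul qs qt) qe1 x - tens2 qe2 (pmul qt qs) x))"
      using d X by blast
    consider (z) "L = 0" "M = 0" | (l) "L \<noteq> 0" "M = 0" | (m) "M \<noteq> 0" "L = 0" using c2(1) by auto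
    then show ?thesis
    proof cases
      case z
      have "br qs qs = (\<lambda>x. 0)" unfolding FS z by simp
      moreover have "br qt qt = (\<lambda>x. 0)" unfolding FT z by simp
      ultimately show ?thesis using XX by blast
    next
      case l
      have "br qs qs = (\<lambda>x. 0)" unfolding FS l by simp
      moreover have "\<exists>lam. lam \<noteq> 0 \<and> br qt qt = (\<lambda>x. lam * (tens2 (pmul (pmul qt qs) qt) qt x
                                              - tens2 qt (pmul (pmul qt qs) qt) x))" using FT l by blast
      ultimately show ?thesis using XX by blast
    next
      case m
      have "br qt qt = (\<lambda>x. 0)" unfolding FT m by simp
      moreover have "\<exists>lam. lam \<noteq> 0 \<and> br qs qs = (\<lambda>x. lam * (tens2 (pmul (pmul qs qt) qs) qs x
                                              - tens2 qs (pmul (pmul qs qt) qs) x))" using FS m by blast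
      ultimately show ?thesis using XX by blast
    qed
  qed
qed

end
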